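(* The map $f_I: W^I\times P^+\to P_I^+$, $f_I(v,\sigma)=v^{-1}(\lambda_v+\sigma)$, is well defined and is a bijection.
   Context: Let $\mathfrak a$ be a Euclidean space with inner product $(\cdot,\cdot)$ and $R\subset\mathfrak a^*$ a root system with Weyl group $W$; for $\alpha\in R$ put $\alpha^\vee=2\alpha/(\alpha,\alpha)$. Fix positive roots $R^+$ with simple roots $\Pi$ and simple reflections $S$; write $\beta<0$ if $\beta\in -R^+$ and $\beta>0$ if $\beta\in R^+$. Let $P=\{\lambda\in\mathfrak a^*:(\lambda,\alpha^\vee)\in\mathbb Z\ \forall\alpha\in R\}$ be the weight lattice, $P^+=\{\lambda\in P:(\lambda,\alpha^\vee)\ge0\ \forall\alpha\in\Pi\}$ the dominant weights, and for $\alpha\in\Pi$ let $\varpi_\alpha\in P$ be the fundamental weight, $(\varpi_\alpha,\beta^\vee)=\delta_{\alpha\beta}$ for $\beta\in\Pi$. Let $I\subset S$, $W_I$ the parabolic subgroup generated by $I$, $R_I\subset R$ its set of roots and $R_I^+=R_I\cap R^+$. Let $W^I=\{v\in W: v(R_I^+)\subset R^+\}$ (the minimal length representatives of $W/W_I$) and $P_I^+=\{\lambda\in P:(\lambda,\alpha)\ge0\ \forall \alpha\in R_I^+\}$. For $v\in W$ the Steinberg weight is $\lambda_v=\sum_{\alpha\in\Pi,\ v^{-1}\alpha<0}\varpi_\alpha\in P^+$. *)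

theory Defs
  imports "HOL-Analysis.Analysis"
begin

text \<open>The Euclidean space a is a type of class euclidean_space; its dual is identified
  with it via the inner product. Positive roots are those positive on a fixed regular
  element h (every positive system arises this way).\<close>

definition coroot :: "'a::real_inner \<Rightarrow> 'a" where
  "coroot \<alpha> = (2 / inner \<alpha> \<alpha>) *\<^sub>R \<alpha>"

definition refl :: "'a::real_inner \<Rightarrow> 'a \<Rightarrow> 'a" where
  "refl \<alpha> x = x - inner x (coroot \<alpha>) *\<^sub>R \<alpha>"

definition root_system :: "'a::euclidean_space set \<Rightarrow> bool" where
  "root_system R \<longleftrightarrow> finite R \<and> 0 \<notin> R \<and> span R = UNIV
     \<and> (\<forall>\<alpha>\<in>R. \<forall>\<beta>\<in>R. refl \<alpha> \<beta> \<in> R)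
     \<and> (\<forall>\<alpha>\<in>R. \<forall>\<beta>\<in>R. inner \<beta> (coroot \<alpha>) \<in> \<int>)
     \<and> (\<forall>\<alpha>\<in>R. \<forall>c::real. c *\<^sub>R \<alpha> \<in> R \<longrightarrow> c = 1 \<or> c = -1)"

inductive_set weyl :: "'a::real_inner set \<Rightarrow> ('a \<Rightarrow> 'a) set" for R where
  weyl_id: "id \<in> weyl R"
| weyl_step: "w \<in> weyl R \<Longrightarrow> \<alpha> \<in> R \<Longrightarrow> refl \<alpha> \<circ> w \<in> weyl R"

definition pos_roots :: "'a::real_inner set \<Rightarrow> 'a \<Rightarrow> 'a set" where
  "pos_roots R h = {\<alpha>\<in>R. inner \<alpha> h > 0}"

definition simple_roots :: "'a::real_inner set \<Rightarrow> 'a \<Rightarrow> 'a set" where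
  "simple_roots R h = {\<alpha>\<in>pos_roots R h.
      \<not> (\<exists>\<beta>\<in>pos_roots R h. \<exists>\<gamma>\<in>pos_roots R h. \<alpha> = \<beta> + \<gamma>)}"

definition simple_refls :: "'a::real_inner set \<Rightarrow> 'a \<Rightarrow> ('a \<Rightarrow> 'a) set" where
  "simple_refls R h = refl ` simple_roots R h"

definition parabolic_roots :: "'a::real_inner set \<Rightarrow> 'a \<Rightarrow> ('a \<Rightarrow> 'a) set \<Rightarrow> 'a set" where
  "parabolic_roots R h I = {\<alpha>\<in>R. \<alpha> \<in> span {\<beta>\<in>simple_roots R h. refl \<beta> \<in> I}}"

definition weight_lattice :: "'a::real_inner set \<Rightarrow> 'a set" where
  "weight_lattice R = {l. \<forall>\<alpha>\<in>R. inner l (coroot \<alpha>) \<in> \<int>}"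

definition dominant_weights :: "'a::real_inner set \<Rightarrow> 'a \<Rightarrow> 'a set" where
  "dominant_weights R h = {l\<in>weight_lattice R. \<forall>\<alpha>\<in>simple_roots R h. inner l (coroot \<alpha>) \<ge> 0}"

definition fund_weight :: "'a::real_inner set \<Rightarrow> 'a \<Rightarrow> 'a \<Rightarrow> 'a" where
  "fund_weight R h \<alpha> = (THE l. \<forall>\<beta>\<in>simple_roots R h.
      inner l (coroot \<beta>) = (if \<beta> = \<alpha> then 1 else 0))"

text \<open>W^I: minimal length coset representatives.\<close>
definition min_reps :: "'a::real_inner set \<Rightarrow> 'a \<Rightarrow> ('a \<Rightarrow> 'a) set \<Rightarrow> ('a \<Rightarrow> 'a) set" where
  "min_reps R h I = {v\<in>weyl R. v ` (parabolic_roots R h I \<inter> pos_roots R h) \<subseteq> pos_roots R h}"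

definition par_dominant :: "'a::real_inner set \<Rightarrow> 'a \<Rightarrow> ('a \<Rightarrow> 'a) set \<Rightarrow> 'a set" where
  "par_dominant R h I = {l\<in>weight_lattice R.
      \<forall>\<alpha>\<in>parabolic_roots R h I \<inter> pos_roots R h. inner l \<alpha> \<ge> 0}"

definition steinberg :: "'a::real_inner set \<Rightarrow> 'a \<Rightarrow> ('a \<Rightarrow> 'a) \<Rightarrow> 'a" where
  "steinberg R h v = (\<Sum>\<alpha>\<in>{\<alpha>\<in>simple_roots R h. inv v \<alpha> \<in> uminus ` pos_roots R h}.
      fund_weight R h \<alpha>)"

end

theory Submission
  imports Defs
begin

lemma linear_refl: "linear (refl a)"
  unfolding refl_def by (rule linearI) (auto simp: inner_add_left algebra_simps)

lemma refl_refl: "a \<noteq> 0 \<Longrightarrow> refl a (refl a x) = x"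
  by (simp add: refl_def coroot_def inner_diff_left algebra_simps)

lemma refl_refl_comp: "a \<noteq> 0 \<Longrightarrow> refl a \<circ> refl a = id"
  by (auto simp: refl_refl)

lemma refl_self: "a \<noteq> 0 \<Longrightarrow> refl a a = - a"
  by (simp add: refl_def coroot_def scaleR_2)

lemma refl_inner: "a \<noteq> 0 \<Longrightarrow> inner (refl a x) (refl a y) = inner x y"
  by (simp add: refl_def coroot_def inner_diff_left inner_diff_right algebra_simps inner_commute)

lemma refl_neg: "refl (- a) = refl a"
  by (auto simp: refl_def coroot_def)

definition prodL :: "'a::real_inner list \<Rightarrow> 'a \<Rightarrow> 'a" where
  "prodL L = foldr (\<lambda>a f. refl a \<circ> f) L id"

lemma prodL_Nil[simp]: "prodL [] = id" by (simp add: prodL_def)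
lemma prodL_Cons[simp]: "prodL (a # L) = refl a \<circ> prodL L" by (simp add: prodL_def)
lemma prodL_append: "prodL (L1 @ L2) = prodL L1 \<circ> prodL L2"
  by (induction L1) (auto simp: prodL_def)

lemma prodL_linear: "linear (prodL L)"
proof (induction L)
  case Nil show ?case by simp (rule linearI, auto)
next
  case (Cons a L) show ?case using linear_compose[OF Cons.IH linear_refl[of a]] by (simp add: o_def)
qed

lemma prodL_inner: "0 \<notin> set L \<Longrightarrow> inner (prodL L x) (prodL L y) = inner x y"
  by (induction L) (auto simp: refl_inner)

lemma prodL_rev_left: "0 \<notin> set L \<Longrightarrow> prodL (rev L) \<circ> prodL L = id"
proof (induction L)
  case (Cons a L)
  have "prodL (rev (a # L)) \<circ> prodL (a # L) = prodL (rev L) \<circ> (refl a \<circ> refl a) \<circ> prodL L"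
    by (simp add: prodL_append comp_assoc)
  also have "\<dots> = id" using Cons.IH Cons.prems by (auto simp: fun_eq_iff refl_refl)
  finally show ?case .
qed simp

lemma prodL_rev_right: "0 \<notin> set L \<Longrightarrow> prodL L \<circ> prodL (rev L) = id"
  using prodL_rev_left[of "rev L"] by simp

lemma prodL_inv: "0 \<notin> set L \<Longrightarrow> inv (prodL L) = prodL (rev L)"
  by (rule inv_unique_comp) (auto simp: prodL_rev_left prodL_rev_right)

lemma prodL_bij: "0 \<notin> set L \<Longrightarrow> bij (prodL L)"
  by (rule o_bij[of "prodL (rev L)"]) (auto simp: prodL_rev_left prodL_rev_right)

locale rsys =
  fixes R :: "'a::euclidean_space set" and h :: 'a
  assumes rs: "root_system R" and reg: "\<forall>\<alpha>\<in>R. inner \<alpha> h \<noteq> 0"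
begin

abbreviation "Rp \<equiv> pos_roots R h"
abbreviation "S \<equiv> simple_roots R h"
abbreviation "W \<equiv> weyl R"
abbreviation "P \<equiv> weight_lattice R"

lemma finR: "finite R" using rs by (simp add: root_system_def)
lemma zero_notin: "0 \<notin> R" using rs by (simp add: root_system_def)
lemma spanR: "span R = UNIV" using rs by (simp add: root_system_def)
lemma refl_closed: "a \<in> R \<Longrightarrow> b \<in> R \<Longrightarrow> refl a b \<in> R" using rs by (simp add: root_system_def)
lemma integral: "a \<in> R \<Longrightarrow> b \<in> R \<Longrightarrow> inner b (coroot a) \<in> \<int>" using rs by (simp add: root_system_def)
lemma reduced: "a \<in> R \<Longrightarrow> c *\<^sub>R a \<in> R \<Longrightarrow> c = 1 \<or> c = -1" using rs by (simp add: root_system_def)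

lemma root_nz: "a \<in> R \<Longrightarrow> a \<noteq> 0" using zero_notin by auto

lemma neg_root: "a \<in> R \<Longrightarrow> - a \<in> R"
  using refl_closed[of a a] refl_self[of a] root_nz by auto

lemma Rp_iff: "a \<in> Rp \<longleftrightarrow> a \<in> R \<and> inner a h > 0" by (simp add: pos_roots_def)

lemma root_cases: "a \<in> R \<Longrightarrow> a \<in> Rp \<or> - a \<in> Rp"
  using reg neg_root by (force simp: Rp_iff)

lemma negRp_iff: "a \<in> uminus ` Rp \<longleftrightarrow> a \<in> R \<and> inner a h < 0"
proof
  assume "a \<in> uminus ` Rp" then obtain b where "b \<in> Rp" "a = - b" by auto
  then show "a \<in> R \<and> inner a h < 0" using neg_root by (auto simp: Rp_iff)
next
  assume "a \<in> R \<and> inner a h < 0"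
  then have "- a \<in> Rp" using neg_root by (auto simp: Rp_iff)
  then show "a \<in> uminus ` Rp" by (metis image_eqI minus_minus)
qed

lemma Rp_sub: "Rp \<subseteq> R" by (auto simp: Rp_iff)
lemma S_sub: "S \<subseteq> Rp" by (auto simp: simple_roots_def)
lemma S_subR: "S \<subseteq> R" using S_sub Rp_sub by auto
lemma finRp: "finite Rp" using finR Rp_sub finite_subset by blast
lemma finS: "finite S" using finR S_subR finite_subset by blast

lemma prodL_root: "set L \<subseteq> R \<Longrightarrow> a \<in> R \<Longrightarrow> prodL L a \<in> R"
  by (induction L) (auto intro: refl_closed)

lemma zero_notin_L: "set L \<subseteq> R \<Longrightarrow> 0 \<notin> set L" using zero_notin by auto

lemma weyl_eq: "w \<in> W \<longleftrightarrow> (\<exists>L. set L \<subseteq> R \<and> w = prodL L)"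
proof
  assume "w \<in> W" then show "\<exists>L. set L \<subseteq> R \<and> w = prodL L"
  proof induction
    case weyl_id then show ?case by (intro exI[of _ "[]"]) simp
  next
    case (weyl_step w \<alpha>)
    then obtain L where "set L \<subseteq> R" "w = prodL L" by auto
    then show ?case using weyl_step by (intro exI[of _ "\<alpha> # L"]) simp
  qed
next
  assume "\<exists>L. set L \<subseteq> R \<and> w = prodL L"
  then obtain L where L: "set L \<subseteq> R" "w = prodL L" by auto
  have "prodL L \<in> W" using L(1) by (induction L) (auto intro: weyl.intros)
  then show "w \<in> W" using L by simp
qed

lemma W_linear: "w \<in> W \<Longrightarrow> linear w"
  using weyl_eq prodL_linear by auto

lemma W_inner: "w \<in> W \<Longrightarrow> inner (w x) (w y) = inner x y"
  using weyl_eq prodL_inner zero_notin_L by metis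

lemma W_root: "w \<in> W \<Longrightarrow> a \<in> R \<Longrightarrow> w a \<in> R"
  using weyl_eq prodL_root by metis

lemma W_inv: "w \<in> W \<Longrightarrow> inv w \<in> W"
proof -
  assume "w \<in> W"
  then obtain L where L: "set L \<subseteq> R" "w = prodL L" using weyl_eq by auto
  then have "inv w = prodL (rev L)" using prodL_inv zero_notin_L by auto
  moreover have "set (rev L) \<subseteq> R" using L by simp
  ultimately show ?thesis using weyl_eq by blast
qed

lemma W_bij: "w \<in> W \<Longrightarrow> bij w"
  using weyl_eq prodL_bij zero_notin_L by metis

lemma W_inv_left[simp]: "w \<in> W \<Longrightarrow> inv w (w x) = x"
  using W_bij bij_inv_eq_iff by metis

lemma W_inv_right[simp]: "w \<in> W \<Longrightarrow> w (inv w x) = x"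
  using W_bij bij_inv_eq_iff by metis

lemma W_comp: "w1 \<in> W \<Longrightarrow> w2 \<in> W \<Longrightarrow> w1 \<circ> w2 \<in> W"
proof -
  assume "w1 \<in> W" "w2 \<in> W"
  then obtain L1 L2 where "set L1 \<subseteq> R" "w1 = prodL L1" "set L2 \<subseteq> R" "w2 = prodL L2"
    using weyl_eq by metis
  then show ?thesis using weyl_eq[of "w1 \<circ> w2"] by (intro iffD2[OF weyl_eq] exI[of _ "L1 @ L2"]) (auto simp: prodL_append)
qed

lemma W_adj: "w \<in> W \<Longrightarrow> inner (w x) y = inner x (inv w y)"
  by (metis W_inner W_inv_right)

lemma W_adj2: "w \<in> W \<Longrightarrow> inner (inv w x) y = inner x (w y)"
  by (metis W_inner W_inv_right)

lemma W_coroot: "w \<in> W \<Longrightarrow> w (coroot a) = coroot (w a)"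
  by (simp add: coroot_def W_inner linear_scale W_linear)

lemma W_refl_conj: "w \<in> W \<Longrightarrow> refl (w a) = w \<circ> refl a \<circ> inv w"
proof
  fix y assume w: "w \<in> W"
  have "(w \<circ> refl a \<circ> inv w) y = y - inner (inv w y) (coroot a) *\<^sub>R w a"
    using w by (simp add: refl_def linear_diff linear_scale W_linear)
  also have "inner (inv w y) (coroot a) = inner y (coroot (w a))"
    using w by (simp add: W_adj2 W_coroot)
  finally show "refl (w a) y = (w \<circ> refl a \<circ> inv w) y" by (simp add: refl_def)
qed

lemma finW: "finite W"
proof (rule inj_on_finite[of "\<lambda>w. restrict w R" W "R \<rightarrow>\<^sub>E R"])
  show "inj_on (\<lambda>w. restrict w R) W"
  proof (rule inj_onI)
    fix w1 w2 assume w: "w1 \<in> W" "w2 \<in> W" "restrict w1 R = restrict w2 R"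
    then have eq: "\<And>x. x \<in> R \<Longrightarrow> w1 x = w2 x" by (metis restrict_apply')
    show "w1 = w2"
    proof
      fix x
      show "w1 x = w2 x"
        using linear_eq_on_span[OF W_linear[OF w(1)] W_linear[OF w(2)] eq] spanR by auto
    qed
  qed
  show "(\<lambda>w. restrict w R) ` W \<subseteq> R \<rightarrow>\<^sub>E R" using W_root by auto
  show "finite (R \<rightarrow>\<^sub>E R)" using finR by (intro finite_PiE) auto
qed

end

context rsys begin

lemma card_less:
  assumes "\<gamma> \<in> Rp" "inner \<gamma> h < inner \<beta> h"
  shows "card {x\<in>Rp. inner x h < inner \<gamma> h} < card {x\<in>Rp. inner x h < inner \<beta> h}"
proof (rule psubset_card_mono)
  show "finite {x\<in>Rp. inner x h < inner \<beta> h}" using finRp by auto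
  show "{x\<in>Rp. inner x h < inner \<gamma> h} \<subset> {x\<in>Rp. inner x h < inner \<beta> h}"
    using assms by auto
qed

lemma not_simple:
  assumes "\<beta> \<in> Rp" "\<beta> \<notin> S"
  obtains \<beta>1 \<beta>2 where "\<beta>1 \<in> Rp" "\<beta>2 \<in> Rp" "\<beta> = \<beta>1 + \<beta>2"
  using assms by (auto simp: simple_roots_def)

lemma sum_delta_vec: "finite A \<Longrightarrow> b \<in> A \<Longrightarrow> (\<Sum>d\<in>A. (if d = b then 1 else 0) *\<^sub>R d) = (b::'a)"
proof -
  assume "finite A" "b \<in> A"
  have "(\<Sum>d\<in>A. (if d = b then 1 else 0) *\<^sub>R d) = (\<Sum>d\<in>A. if d = b then d else 0)"
    by (rule sum.cong) auto
  also have "\<dots> = b" using \<open>finite A\<close> \<open>b \<in> A\<close> by (simp add: sum.delta')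
  finally show ?thesis .
qed

lemma cone: "\<beta> \<in> Rp \<Longrightarrow> \<exists>c. (\<forall>d\<in>S. c d \<ge> 0) \<and> \<beta> = (\<Sum>d\<in>S. c d *\<^sub>R d)"
proof (induction "card {x\<in>Rp. inner x h < inner \<beta> h}" arbitrary: \<beta> rule: less_induct)
  case less
  show ?case
  proof (cases "\<beta> \<in> S")
    case True
    then show ?thesis using finS
      by (intro exI[of _ "\<lambda>d. if d = \<beta> then 1 else 0"]) (simp add: sum_delta_vec)
  next
    case False
    then obtain b1 b2 where b: "b1 \<in> Rp" "b2 \<in> Rp" "\<beta> = b1 + b2" using less.prems not_simple by metis
    have l1: "inner b1 h < inner \<beta> h" and l2: "inner b2 h < inner \<beta> h" using b by (auto simp: Rp_iff inner_add_left)
    obtain c1 where c1: "\<forall>d\<in>S. c1 d \<ge> 0" "b1 = (\<Sum>d\<in>S. c1 d *\<^sub>R d)"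
      using less.hyps[OF card_less[OF b(1) l1] b(1)] by blast
    obtain c2 where c2: "\<forall>d\<in>S. c2 d \<ge> 0" "b2 = (\<Sum>d\<in>S. c2 d *\<^sub>R d)"
      using less.hyps[OF card_less[OF b(2) l2] b(2)] by blast
    have "\<beta> = (\<Sum>d\<in>S. (c1 d + c2 d) *\<^sub>R d)"
      unfolding b(3) c1(2) c2(2) by (simp add: scaleR_add_left sum.distrib)
    then show ?thesis using c1(1) c2(1)
      by (intro exI[of _ "\<lambda>d. c1 d + c2 d"]) auto
  qed
qed

lemma dom_pos:
  assumes "\<forall>a\<in>S. inner l (coroot a) \<ge> 0" "\<beta> \<in> Rp"
  shows "inner l \<beta> \<ge> 0"
proof -
  obtain c where c: "\<forall>d\<in>S. c d \<ge> 0" "\<beta> = (\<Sum>d\<in>S. c d *\<^sub>R d)" using cone assms(2) by metis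
  have "\<And>d. d \<in> S \<Longrightarrow> inner l d \<ge> 0"
  proof -
    fix d assume d: "d \<in> S"
    then have "d \<noteq> 0" using S_subR root_nz by auto
    then have pos: "inner d d > 0" by simp
    have "0 \<le> inner l (coroot d)" using assms d by auto
    also have "inner l (coroot d) = (2 / inner d d) * inner l d" by (simp add: coroot_def)
    finally show "inner l d \<ge> 0" using pos by (simp add: zero_le_divide_iff zero_le_mult_iff)
  qed
  then have "0 \<le> (\<Sum>d\<in>S. c d * inner l d)" using c by (auto intro!: sum_nonneg)
  also have "\<dots> = inner l \<beta>" by (simp add: c inner_sum_right)
  finally show ?thesis .
qed

end

context rsys begin

lemma simple_inner_nonpos:
  assumes a: "a \<in> S" and b: "b \<in> S" and ab: "a \<noteq> b"
  shows "inner a b \<le> 0"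
proof (rule ccontr)
  assume "\<not> inner a b \<le> 0"
  then have pos: "inner a b > 0" by simp
  have aR: "a \<in> R" and bR: "b \<in> R" using a b S_subR by auto
  have ah: "inner a h > 0" and bh: "inner b h > 0" using a b S_sub by (auto simp: Rp_iff)
  have an: "a \<noteq> 0" and bn: "b \<noteq> 0" using aR bR root_nz by auto
  have nm: "norm a > 0" "norm b > 0" using an bn by auto
  have "\<not> (norm a *\<^sub>R b = norm b *\<^sub>R a \<or> norm a *\<^sub>R b = - norm b *\<^sub>R a)"
  proof
    assume "norm a *\<^sub>R b = norm b *\<^sub>R a \<or> norm a *\<^sub>R b = - norm b *\<^sub>R a"
    then obtain c where c: "b = c *\<^sub>R a"
    proof
      assume "norm a *\<^sub>R b = norm b *\<^sub>R a"
      then have "(1 / norm a) *\<^sub>R (norm a *\<^sub>R b) = (1 / norm a) *\<^sub>R (norm b *\<^sub>R a)" by simp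
      then have "b = (norm b / norm a) *\<^sub>R a" using nm by simp
      then show thesis using that by blast
    next
      assume "norm a *\<^sub>R b = - norm b *\<^sub>R a"
      then have "(1 / norm a) *\<^sub>R (norm a *\<^sub>R b) = (1 / norm a) *\<^sub>R (- norm b *\<^sub>R a)" by simp
      then have "b = (- norm b / norm a) *\<^sub>R a" using nm by simp
      then show thesis using that by blast
    qed
    then have "c = 1 \<or> c = -1" using reduced aR bR by auto
    then show False using c ab ah bh by auto
  qed
  then have "\<bar>inner a b\<bar> \<noteq> norm a * norm b" using norm_cauchy_schwarz_abs_eq by blast
  then have lt: "inner a b < norm a * norm b" using Cauchy_Schwarz_ineq2[of a b] pos by auto
  have "(inner a b)^2 < (norm a * norm b)^2" using lt pos by (intro power_strict_mono) auto
  then have lt2: "(inner a b)^2 < inner a a * inner b b"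
    by (simp add: power_mult_distrib power2_norm_eq_inner)
  define m where "m = inner a (coroot b)"
  define n where "n = inner b (coroot a)"
  have aa: "inner a a > 0" "inner b b > 0" using an bn by auto
  have mpos: "m > 0" unfolding m_def coroot_def using pos aa by simp
  have npos: "n > 0" unfolding n_def coroot_def using pos aa by (simp add: inner_commute)
  have "m * n = 4 * (inner a b)^2 / (inner a a * inner b b)"
    unfolding m_def n_def coroot_def by (simp add: inner_commute power2_eq_square field_simps)
  also have "\<dots> < 4" using lt2 aa by (simp add: field_simps)
  finally have mn: "m * n < 4" .
  have "m \<in> \<int>" "n \<in> \<int>" unfolding m_def n_def using integral aR bR by auto
  then obtain i j :: int where ij: "m = of_int i" "n = of_int j" by (metis Ints_cases)
  have "real_of_int (i * j) < real_of_int 4" using mn ij by simp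
  then have ij4: "i * j < 4" by (simp only: of_int_less_iff)
  have "i \<ge> 1" "j \<ge> 1" using mpos npos ij by auto
  then have "i = 1 \<or> j = 1" using ij4
  proof -
    assume "i \<ge> 1" "j \<ge> 1" "i * j < 4"
    show "i = 1 \<or> j = 1"
    proof (rule ccontr)
      assume "\<not> (i = 1 \<or> j = 1)"
      then have "i \<ge> 2" "j \<ge> 2" using \<open>i \<ge> 1\<close> \<open>j \<ge> 1\<close> by auto
      then have "i * j \<ge> 2 * 2" by (intro mult_mono) auto
      then show False using \<open>i * j < 4\<close> by simp
    qed
  qed
  then have "a - b \<in> R"
  proof
    assume "i = 1"
    then have "refl b a = a - b" using ij by (simp add: refl_def m_def)
    then show ?thesis using refl_closed[OF bR aR] by simp
  next
    assume "j = 1"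
    then have "refl a b = b - a" using ij by (simp add: refl_def n_def)
    then have "b - a \<in> R" using refl_closed[OF aR bR] by simp
    then show ?thesis using neg_root by fastforce
  qed
  then show False
  proof (cases rule: disjE[OF root_cases])
    assume "a - b \<in> Rp"
    have nd: "\<not> (\<exists>x\<in>Rp. \<exists>y\<in>Rp. a = x + y)" using a by (simp add: simple_roots_def)
    have "b \<in> Rp" using b S_sub by auto
    then have "\<not> (a = (a - b) + b)" using nd \<open>a - b \<in> Rp\<close> by blast
    then show False by simp
  next
    assume "- (a - b) \<in> Rp"
    then have "b - a \<in> Rp" by simp
    have nd: "\<not> (\<exists>x\<in>Rp. \<exists>y\<in>Rp. b = x + y)" using b by (simp add: simple_roots_def)
    have "a \<in> Rp" using a S_sub by auto
    then have "\<not> (b = a + (b - a))" using nd \<open>b - a \<in> Rp\<close> by blast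
    then show False by simp
  qed
qed

end

context rsys begin

lemma indep: "independent S"
proof
  assume "dependent S"
  then obtain u where u: "\<exists>v\<in>S. u v \<noteq> 0" "(\<Sum>v\<in>S. u v *\<^sub>R v) = 0"
    using dependent_finite finS by blast
  define p where "p v = max (u v) 0" for v
  define q where "q v = - min (u v) 0" for v
  have pq: "u v = p v - q v" for v by (simp add: p_def q_def max_def min_def)
  have p0: "p v \<ge> 0" and q0: "q v \<ge> 0" for v by (auto simp: p_def q_def)
  have pq0: "p v * q v = 0" for v by (simp add: p_def q_def max_def min_def)
  define y where "y = (\<Sum>v\<in>S. p v *\<^sub>R v)"
  have "(\<Sum>v\<in>S. (p v - q v) *\<^sub>R v) = 0" using u(2) pq by simp
  then have "(\<Sum>v\<in>S. p v *\<^sub>R v) - (\<Sum>v\<in>S. q v *\<^sub>R v) = 0"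
    by (simp add: scaleR_diff_left sum_subtractf)
  then have y2: "y = (\<Sum>v\<in>S. q v *\<^sub>R v)" by (simp add: y_def)
  have "inner y y = inner (\<Sum>a\<in>S. p a *\<^sub>R a) (\<Sum>b\<in>S. q b *\<^sub>R b)" using y_def y2 by metis
  also have "\<dots> = (\<Sum>a\<in>S. \<Sum>b\<in>S. inner (p a *\<^sub>R a) (q b *\<^sub>R b))"
    by (simp only: inner_sum_left inner_sum_right, rule sum.swap)
  also have "\<dots> \<le> 0"
  proof (intro sum_nonpos)
    fix a b assume ab: "a \<in> S" "b \<in> S"
    show "inner (p a *\<^sub>R a) (q b *\<^sub>R b) \<le> 0"
    proof (cases "a = b")
      case True then show ?thesis using pq0[of a] by (auto simp: mult.commute)
    next
      case False
      then have "inner a b \<le> 0" using simple_inner_nonpos ab by auto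
      moreover have "p a * q b \<ge> 0" using p0 q0 by simp
      ultimately have "(p a * q b) * inner a b \<le> 0" by (simp add: mult_nonneg_nonpos)
      then show ?thesis by (simp add: mult_ac)
    qed
  qed
  finally have "inner y y \<le> 0" .
  then have "y = 0" by (metis antisym inner_ge_zero inner_eq_zero_iff)
  have hpos: "v \<in> S \<Longrightarrow> inner v h > 0" for v using S_sub by (auto simp: Rp_iff)
  have "(\<Sum>v\<in>S. p v * inner v h) = inner y h" by (simp add: y_def inner_sum_left)
  then have "(\<Sum>v\<in>S. p v * inner v h) = 0" using \<open>y = 0\<close> by simp
  then have "\<forall>v\<in>S. p v * inner v h = 0" using finS p0 hpos
    by (subst (asm) sum_nonneg_eq_0_iff) (auto intro: mult_nonneg_nonneg less_imp_le)
  then have pz: "\<forall>v\<in>S. p v = 0" using hpos by fastforce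
  have "(\<Sum>v\<in>S. q v * inner v h) = inner y h" by (simp add: y2 inner_sum_left)
  then have "(\<Sum>v\<in>S. q v * inner v h) = 0" using \<open>y = 0\<close> by simp
  then have "\<forall>v\<in>S. q v * inner v h = 0" using finS q0 hpos
    by (subst (asm) sum_nonneg_eq_0_iff) (auto intro: mult_nonneg_nonneg less_imp_le)
  then have qz: "\<forall>v\<in>S. q v = 0" using hpos by fastforce
  show False using u(1) pz qz pq by auto
qed

lemma Rp_span: "\<beta> \<in> Rp \<Longrightarrow> \<beta> \<in> span S"
proof -
  assume "\<beta> \<in> Rp"
  then obtain c where c: "\<beta> = (\<Sum>d\<in>S. c d *\<^sub>R d)" using cone by blast
  have "\<And>d. d \<in> S \<Longrightarrow> c d *\<^sub>R d \<in> span S" by (intro span_scale span_base)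
  then show ?thesis unfolding c by (rule span_sum)
qed

lemma R_span: "R \<subseteq> span S"
proof
  fix b assume "b \<in> R"
  then show "b \<in> span S"
    using root_cases Rp_span span_neg by (metis minus_minus)
qed

lemma spanS: "span S = UNIV"
  using span_minimal[OF R_span subspace_span] spanR by auto

lemma coeff_unique:
  assumes "(\<Sum>d\<in>S. c d *\<^sub>R d) = (\<Sum>d\<in>S. e d *\<^sub>R d)" "d \<in> S"
  shows "c d = e d"
proof (rule ccontr)
  assume ne: "c d \<noteq> e d"
  have "(\<Sum>d\<in>S. (c d - e d) *\<^sub>R d) = 0" using assms(1) by (simp add: scaleR_diff_left sum_subtractf)
  then have "dependent S" using dependent_finite[OF finS] ne assms(2)
    by (intro iffD2[OF dependent_finite[OF finS]] exI[of _ "\<lambda>d. c d - e d"]) auto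
  then show False using indep by simp
qed

lemma fw_exists: "a \<in> S \<Longrightarrow> \<exists>l. \<forall>b\<in>S. inner l (coroot b) = (if b = a then 1 else 0)"
proof -
  assume a: "a \<in> S"
  obtain y z where yz: "y \<in> span (S - {a})" "\<And>w. w \<in> span (S - {a}) \<Longrightarrow> orthogonal z w" "a = y + z"
    by (metis orthogonal_subspace_decomp_exists)
  have "z \<noteq> 0"
  proof
    assume "z = 0"
    then have "a \<in> span (S - {a})" using yz by simp
    then have "dependent S" using a dependent_def by blast
    then show False using indep by simp
  qed
  then have zz: "inner z z > 0" by simp
  have "inner z y = 0" using yz(2)[OF yz(1)] by (simp add: orthogonal_def)
  then have za: "inner z a = inner z z" using yz(3) by (simp add: inner_add_right)
  have an: "a \<noteq> 0" using a S_subR root_nz by auto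
  then have aa: "inner a a > 0" by simp
  define l where "l = (inner a a / (2 * inner z z)) *\<^sub>R z"
  have "\<forall>b\<in>S. inner l (coroot b) = (if b = a then 1 else 0)"
  proof
    fix b assume b: "b \<in> S"
    show "inner l (coroot b) = (if b = a then 1 else 0)"
    proof (cases "b = a")
      case True
      then show ?thesis using zz aa za by (simp add: l_def coroot_def inner_commute)
    next
      case False
      then have "b \<in> span (S - {a})" using b by (auto intro: span_base)
      then have "inner z b = 0" using yz(2) by (simp add: orthogonal_def)
      then show ?thesis using False by (simp add: l_def coroot_def)
    qed
  qed
  then show ?thesis by blast
qed

lemma fw_unique:
  assumes "\<forall>b\<in>S. inner l (coroot b) = inner l' (coroot b)"
  shows "l = l'"
proof -
  have "\<forall>b\<in>S. orthogonal (l - l') b"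
  proof
    fix b assume b: "b \<in> S"
    then have "b \<noteq> 0" using S_subR root_nz by auto
    then have bb: "inner b b \<noteq> 0" by simp
    have "(2 / inner b b) * inner l b = (2 / inner b b) * inner l' b"
      using assms b by (simp add: coroot_def)
    then have "inner l b = inner l' b" using bb by simp
    then show "orthogonal (l - l') b" by (simp add: orthogonal_def inner_diff_left)
  qed
  then have "orthogonal (l - l') (l - l')"
    using orthogonal_to_span[of "l - l'" S "l - l'"] spanS by auto
  then show ?thesis by (simp add: orthogonal_def)
qed

lemma fw_prop:
  assumes "a \<in> S" "b \<in> S"
  shows "inner (fund_weight R h a) (coroot b) = (if b = a then 1 else 0)"
proof -
  have ex1: "\<exists>!l. \<forall>b\<in>S. inner l (coroot b) = (if b = a then 1 else 0)"
    using fw_exists[OF assms(1)] fw_unique by metis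
  show ?thesis using theI'[OF ex1] assms(2) unfolding fund_weight_def by blast
qed

lemma sum_upd:
  assumes "a \<in> S"
  shows "(\<Sum>d\<in>S. (c(a := t)) d *\<^sub>R d) = (\<Sum>d\<in>S. c d *\<^sub>R d) + (t - c a) *\<^sub>R a"
proof -
  have "(\<Sum>d\<in>S. (c(a := t)) d *\<^sub>R d) = t *\<^sub>R a + (\<Sum>d\<in>S - {a}. (c(a := t)) d *\<^sub>R d)"
    using sum.remove[OF finS assms, of "\<lambda>d. (c(a := t)) d *\<^sub>R d"] by simp
  also have "(\<Sum>d\<in>S - {a}. (c(a := t)) d *\<^sub>R d) = (\<Sum>d\<in>S - {a}. c d *\<^sub>R d)"
    by (rule sum.cong) auto
  also have "(\<Sum>d\<in>S. c d *\<^sub>R d) = c a *\<^sub>R a + (\<Sum>d\<in>S - {a}. c d *\<^sub>R d)"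
    using sum.remove[OF finS assms] by simp
  ultimately show ?thesis by (simp add: algebra_simps)
qed

lemma refl_simple_pos:
  assumes a: "a \<in> S" and b: "\<beta> \<in> Rp" and ne: "\<beta> \<noteq> a"
  shows "refl a \<beta> \<in> Rp"
proof -
  obtain c where c: "\<forall>d\<in>S. c d \<ge> 0" "\<beta> = (\<Sum>d\<in>S. c d *\<^sub>R d)" using cone b by blast
  have aR: "a \<in> R" using a S_subR by auto
  have "\<exists>d0\<in>S. d0 \<noteq> a \<and> c d0 > 0"
  proof (rule ccontr)
    assume "\<not> (\<exists>d0\<in>S. d0 \<noteq> a \<and> c d0 > 0)"
    then have z: "\<forall>d\<in>S - {a}. c d = 0" using c(1) by force
    have "\<beta> = c a *\<^sub>R a + (\<Sum>d\<in>S - {a}. c d *\<^sub>R d)"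
      using sum.remove[OF finS a] c(2) by simp
    also have "(\<Sum>d\<in>S - {a}. c d *\<^sub>R d) = 0" using z by simp
    finally have bc: "\<beta> = c a *\<^sub>R a" by simp
    then have "c a = 1 \<or> c a = -1" using reduced[OF aR] b Rp_sub by auto
    then show False
    proof
      assume "c a = 1" then show False using bc ne by simp
    next
      assume "c a = -1" then have "\<beta> = - a" using bc by simp
      then show False using a b S_sub by (auto simp: Rp_iff)
    qed
  qed
  then obtain d0 where d0: "d0 \<in> S" "d0 \<noteq> a" "c d0 > 0" by blast
  define k where "k = inner \<beta> (coroot a)"
  define c' where "c' = c(a := c a - k)"
  have rb: "refl a \<beta> = (\<Sum>d\<in>S. c' d *\<^sub>R d)"
    unfolding c'_def using sum_upd[OF a, of c "c a - k"] c(2) by (simp add: refl_def k_def)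
  have "refl a \<beta> \<in> R" using refl_closed[OF aR] b Rp_sub by auto
  then have "refl a \<beta> \<in> Rp \<or> - refl a \<beta> \<in> Rp" using root_cases by blast
  then show ?thesis
  proof
    assume "- refl a \<beta> \<in> Rp"
    then obtain e where e: "\<forall>d\<in>S. e d \<ge> 0" "- refl a \<beta> = (\<Sum>d\<in>S. e d *\<^sub>R d)" using cone by blast
    have "(\<Sum>d\<in>S. (c' d + e d) *\<^sub>R d) = (\<Sum>d\<in>S. (\<lambda>_. 0) d *\<^sub>R d)"
      using rb e(2) by (simp add: scaleR_add_left sum.distrib) (metis add.right_inverse)
    then have "c' d0 + e d0 = 0" using coeff_unique[of "\<lambda>d. c' d + e d" "\<lambda>_. 0" d0] d0(1) by blast
    moreover have "c' d0 = c d0" using d0 by (simp add: c'_def)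
    ultimately show ?thesis using e(1) d0 by (metis add_pos_nonneg less_irrefl)
  qed
qed

end

context rsys begin

lemma S_nz: "a \<in> S \<Longrightarrow> a \<noteq> 0" using S_subR root_nz by auto
lemma S_h: "a \<in> S \<Longrightarrow> inner a h > 0" using S_sub by (auto simp: Rp_iff)

lemma exists_pos_simple: "\<beta> \<in> Rp \<Longrightarrow> \<exists>a\<in>S. inner \<beta> a > 0"
proof (rule ccontr)
  assume b: "\<beta> \<in> Rp" and n: "\<not> (\<exists>a\<in>S. inner \<beta> a > 0)"
  obtain c where c: "\<forall>d\<in>S. c d \<ge> 0" "\<beta> = (\<Sum>d\<in>S. c d *\<^sub>R d)" using cone b by blast
  have "inner \<beta> \<beta> = (\<Sum>d\<in>S. c d * inner \<beta> d)"
    by (subst (2) c(2)) (simp add: inner_sum_right)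
  also have "\<dots> \<le> 0" using c(1) n by (intro sum_nonpos) (auto simp: mult_nonneg_nonpos)
  finally have "\<beta> = 0" by (metis antisym inner_ge_zero inner_eq_zero_iff)
  then show False using b Rp_sub root_nz by auto
qed

lemma pos_conj_simple: "\<beta> \<in> Rp \<Longrightarrow> \<exists>L a. set L \<subseteq> S \<and> a \<in> S \<and> prodL L a = \<beta>"
proof (induction "card {x\<in>Rp. inner x h < inner \<beta> h}" arbitrary: \<beta> rule: less_induct)
  case less
  show ?case
  proof (cases "\<beta> \<in> S")
    case True then show ?thesis by (intro exI[of _ "[]"] exI[of _ \<beta>]) simp
  next
    case False
    obtain a where a: "a \<in> S" "inner \<beta> a > 0" using exists_pos_simple less.prems by blast
    have an: "a \<noteq> 0" using S_nz a by auto
    then have aa: "inner a a > 0" by simp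
    define k where "k = inner \<beta> (coroot a)"
    have kpos: "k > 0" unfolding k_def coroot_def using a aa by simp
    have ne: "\<beta> \<noteq> a" using False a by auto
    have b': "refl a \<beta> \<in> Rp" using refl_simple_pos[OF a(1) less.prems ne] .
    have "inner (refl a \<beta>) h = inner \<beta> h - k * inner a h"
      by (simp add: refl_def k_def inner_diff_left)
    then have lt: "inner (refl a \<beta>) h < inner \<beta> h" using kpos S_h[OF a(1)] by simp
    obtain L c where Lc: "set L \<subseteq> S" "c \<in> S" "prodL L c = refl a \<beta>"
      using less.hyps[OF card_less[OF b' lt] b'] by blast
    have "prodL (a # L) c = \<beta>" using Lc(3) refl_refl[OF an] by simp
    then show ?thesis using Lc a by (intro exI[of _ "a # L"] exI[of _ c]) auto
  qed
qed

lemma refl_W0: "\<beta> \<in> R \<Longrightarrow> \<exists>L. set L \<subseteq> S \<and> refl \<beta> = prodL L"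
proof -
  have main: "\<exists>L. set L \<subseteq> S \<and> refl b = prodL L" if b: "b \<in> Rp" for b
  proof -
    obtain L a where La: "set L \<subseteq> S" "a \<in> S" "prodL L a = b" using pos_conj_simple b by blast
    have LR: "set L \<subseteq> R" using La S_subR by auto
    then have uW: "prodL L \<in> W" using weyl_eq by auto
    have "refl b = prodL L \<circ> refl a \<circ> inv (prodL L)" using W_refl_conj[OF uW, of a] La by simp
    also have "inv (prodL L) = prodL (rev L)" by (rule prodL_inv[OF zero_notin_L[OF LR]])
    finally have "refl b = prodL (L @ [a] @ rev L)" by (simp add: prodL_append o_def)
    moreover have "set (L @ [a] @ rev L) \<subseteq> S" using La by auto
    ultimately show ?thesis by blast
  qed
  assume "\<beta> \<in> R"
  then show ?thesis using root_cases main refl_neg by metis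
qed

lemma W_W0: "w \<in> W \<Longrightarrow> \<exists>L. set L \<subseteq> S \<and> w = prodL L"
proof (induction rule: weyl.induct)
  case weyl_id then show ?case by (intro exI[of _ "[]"]) simp
next
  case (weyl_step w \<alpha>)
  obtain L1 where L1: "set L1 \<subseteq> S" "refl \<alpha> = prodL L1" using refl_W0 weyl_step by blast
  obtain L2 where L2: "set L2 \<subseteq> S" "w = prodL L2" using weyl_step by blast
  show ?case using L1 L2 by (intro exI[of _ "L1 @ L2"]) (simp add: prodL_append)
qed

lemma deletion:
  "set L \<subseteq> S \<Longrightarrow> a \<in> S \<Longrightarrow> inner (prodL L a) h < 0 \<Longrightarrow>
    \<exists>L'. set L' \<subseteq> S \<and> length L' + 1 = length L \<and> prodL L \<circ> refl a = prodL L'"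
proof (induction L)
  case Nil then show ?case using S_h[of a] by simp
next
  case (Cons b L0)
  have L0: "set L0 \<subseteq> S" and bS: "b \<in> S" using Cons.prems by auto
  have L0R: "set L0 \<subseteq> R" using L0 S_subR by auto
  have uR: "prodL L0 a \<in> R" using prodL_root[OF L0R] Cons.prems S_subR by auto
  show ?case
  proof (cases "inner (prodL L0 a) h < 0")
    case True
    obtain L0' where L0': "set L0' \<subseteq> S" "length L0' + 1 = length L0" "prodL L0 \<circ> refl a = prodL L0'"
      using Cons.IH[OF L0 Cons.prems(2) True] by blast
    have "prodL (b # L0) \<circ> refl a = prodL (b # L0')"
      by (metis L0'(3) prodL_Cons comp_assoc)
    moreover have "set (b # L0') \<subseteq> S" using L0' bS by auto
    moreover have "length (b # L0') + 1 = length (b # L0)" using L0' by simp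
    ultimately show ?thesis by blast
  next
    case False
    then have "inner (prodL L0 a) h > 0" using reg uR by force
    then have uRp: "prodL L0 a \<in> Rp" using uR by (simp add: Rp_iff)
    have "refl b (prodL L0 a) \<notin> Rp" using Cons.prems(3) by (simp add: Rp_iff)
    then have ub: "prodL L0 a = b" using refl_simple_pos[OF bS uRp] by blast
    have uW: "prodL L0 \<in> W" using weyl_eq L0R by auto
    have rb: "refl b = prodL L0 \<circ> refl a \<circ> inv (prodL L0)" using W_refl_conj[OF uW, of a] ub by simp
    have an: "a \<noteq> 0" using S_nz Cons.prems by auto
    have "prodL (b # L0) \<circ> refl a = prodL L0"
    proof
      fix x
      show "(prodL (b # L0) \<circ> refl a) x = prodL L0 x"
        using rb uW refl_refl[OF an] by (simp add: fun_eq_iff)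
    qed
    moreover have "length L0 + 1 = length (b # L0)" by simp
    ultimately show ?thesis using L0 by blast
  qed
qed

lemma W0_pos_id: "set L \<subseteq> S \<Longrightarrow> prodL L ` Rp \<subseteq> Rp \<Longrightarrow> prodL L = id"
proof (induction L rule: length_induct)
  case (1 L)
  show ?case
  proof (cases L rule: rev_cases)
    case Nil then show ?thesis by simp
  next
    case (snoc L0 a)
    have aS: "a \<in> S" and L0: "set L0 \<subseteq> S" using 1(2) snoc by auto
    have an: "a \<noteq> 0" using S_nz aS by auto
    have eq: "prodL L = prodL L0 \<circ> refl a" using snoc by (simp add: prodL_append)
    have "prodL L a \<in> Rp" using 1(3) aS S_sub by auto
    moreover have "prodL L a = - prodL L0 a"
      using eq refl_self[OF an] linear_neg[OF prodL_linear] by simp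
    ultimately have "inner (prodL L0 a) h < 0" by (simp add: Rp_iff)
    then obtain L' where L': "set L' \<subseteq> S" "length L' + 1 = length L0" "prodL L0 \<circ> refl a = prodL L'"
      using deletion[OF L0 aS] by blast
    have "prodL L = prodL L'" using eq L' by simp
    moreover have "length L' < length L" using L' snoc by simp
    ultimately show ?thesis using 1(1) L'(1) 1(3) by metis
  qed
qed

lemma W_pos_id: "w \<in> W \<Longrightarrow> w ` Rp \<subseteq> Rp \<Longrightarrow> w = id"
  using W_W0 W0_pos_id by metis

lemma W_regular: "w \<in> W \<Longrightarrow> \<forall>\<beta>\<in>R. inner x \<beta> \<noteq> 0 \<Longrightarrow> b \<in> R \<Longrightarrow> inner (w x) b \<noteq> 0"
  using W_adj W_root W_inv by metis

lemma chamber_exists: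
  assumes xr: "\<forall>\<beta>\<in>R. inner x \<beta> \<noteq> 0"
  shows "\<exists>w\<in>W. \<forall>\<beta>\<in>Rp. inner (w x) \<beta> > 0"
proof -
  define F where "F = (\<lambda>w. inner (w x) h) ` W"
  have fin: "finite F" using finW by (simp add: F_def)
  have ne: "F \<noteq> {}" using weyl_id by (auto simp: F_def)
  have "Max F \<in> F" using fin ne by simp
  then obtain w where w: "w \<in> W" "inner (w x) h = Max F" by (auto simp: F_def)
  have wmax: "\<And>w'. w' \<in> W \<Longrightarrow> inner (w' x) h \<le> inner (w x) h"
    using w fin by (auto simp: F_def)
  have sp: "inner (w x) (coroot a) \<ge> 0" if a: "a \<in> S" for a
  proof (rule ccontr)
    assume neg: "\<not> inner (w x) (coroot a) \<ge> 0"
    have "refl a \<circ> w \<in> W" using w a S_subR by (auto intro: weyl_step)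
    then have "inner (refl a (w x)) h \<le> inner (w x) h" using wmax by fastforce
    moreover have "inner (refl a (w x)) h = inner (w x) h - inner (w x) (coroot a) * inner a h"
      by (simp add: refl_def inner_diff_left)
    moreover have "inner (w x) (coroot a) * inner a h < 0"
      using neg S_h[OF a] mult_neg_pos[of "inner (w x) (coroot a)" "inner a h"] by simp
    ultimately show False by linarith
  qed
  have "\<forall>\<beta>\<in>Rp. inner (w x) \<beta> > 0"
  proof
    fix b assume b: "b \<in> Rp"
    have "inner (w x) b \<ge> 0" using dom_pos[of "w x" b] sp b by blast
    moreover have "inner (w x) b \<noteq> 0" using W_regular[OF w(1) xr] b Rp_sub by auto
    ultimately show "inner (w x) b > 0" by simp
  qed
  then show ?thesis using w by blast
qed

lemma chamber_unique:
  assumes w: "w1 \<in> W" "w2 \<in> W"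
    and c1: "\<forall>\<beta>\<in>Rp. inner (w1 x) \<beta> > 0" and c2: "\<forall>\<beta>\<in>Rp. inner (w2 x) \<beta> > 0"
  shows "w1 = w2"
proof -
  define u where "u = w2 \<circ> inv w1"
  have uW: "u \<in> W" unfolding u_def using w W_comp W_inv by blast
  have ux: "u (w1 x) = w2 x" using w by (simp add: u_def)
  have "u ` Rp \<subseteq> Rp"
  proof
    fix y assume "y \<in> u ` Rp"
    then obtain b where b: "b \<in> Rp" "y = u b" by auto
    have yR: "y \<in> R" using b W_root[OF uW] Rp_sub by auto
    have "inner (w2 x) y = inner (w1 x) b" using b ux W_inner[OF uW] by metis
    then have pos: "inner (w2 x) y > 0" using c1 b by simp
    show "y \<in> Rp"
    proof (rule ccontr)
      assume "y \<notin> Rp"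
      then have "- y \<in> Rp" using root_cases yR by blast
      then show False using c2 pos by force
    qed
  qed
  then have "u = id" using W_pos_id uW by blast
  show ?thesis
  proof
    fix y
    have "w2 y = u (w1 y)" using w by (simp add: u_def)
    then show "w1 y = w2 y" using \<open>u = id\<close> by simp
  qed
qed

end

context rsys begin

lemma P_iff: "l \<in> P \<longleftrightarrow> (\<forall>a\<in>R. inner l (coroot a) \<in> \<int>)"
  by (simp add: weight_lattice_def)

lemma P_W: "l \<in> P \<Longrightarrow> w \<in> W \<Longrightarrow> w l \<in> P"
proof -
  assume l: "l \<in> P" and w: "w \<in> W"
  have "inner (w l) (coroot a) \<in> \<int>" if a: "a \<in> R" for a
  proof -
    have "inner (w l) (coroot a) = inner l (inv w (coroot a))" using W_adj[OF w] by simp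
    also have "\<dots> = inner l (coroot (inv w a))" using W_coroot[OF W_inv[OF w]] by simp
    finally show ?thesis using l a W_root[OF W_inv[OF w]] by (simp add: P_iff)
  qed
  then show ?thesis by (simp add: P_iff)
qed

lemma P_add: "l \<in> P \<Longrightarrow> l' \<in> P \<Longrightarrow> l + l' \<in> P"
  by (simp add: P_iff inner_add_left Ints_add)

lemma P_diff: "l \<in> P \<Longrightarrow> l' \<in> P \<Longrightarrow> l - l' \<in> P"
  by (simp add: P_iff inner_diff_left Ints_diff)

lemma P_zero: "0 \<in> P" by (simp add: P_iff)

lemma P_sum: "(\<And>a. a \<in> A \<Longrightarrow> f a \<in> P) \<Longrightarrow> sum f A \<in> P"
  by (induction A rule: infinite_finite_induct) (auto simp: P_zero P_add)

lemma coroot_neg: "coroot (- a) = - coroot a" by (simp add: coroot_def)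

lemma P_simple:
  assumes l: "\<forall>a\<in>S. inner l (coroot a) \<in> \<int>"
  shows "l \<in> P"
proof -
  define P' where "P' = {y. \<forall>a\<in>S. inner y (coroot a) \<in> \<int>}"
  have stab: "set M \<subseteq> S \<Longrightarrow> y \<in> P' \<Longrightarrow> prodL M y \<in> P'" for M y
  proof (induction M)
    case (Cons d M)
    then have yM: "prodL M y \<in> P'" and d: "d \<in> S" by auto
    have "inner (refl d (prodL M y)) (coroot a) \<in> \<int>" if a: "a \<in> S" for a
    proof -
      have "inner (refl d (prodL M y)) (coroot a)
          = inner (prodL M y) (coroot a) - inner (prodL M y) (coroot d) * inner d (coroot a)"
        by (simp add: refl_def inner_diff_left)
      moreover have "inner d (coroot a) \<in> \<int>" using integral a d S_subR by auto
      ultimately show ?thesis using yM a d by (auto simp: P'_def intro!: Ints_diff Ints_mult)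
    qed
    then show ?case by (simp add: P'_def)
  qed simp
  have lP': "l \<in> P'" using l by (simp add: P'_def)
  have pos: "inner l (coroot g) \<in> \<int>" if g: "g \<in> Rp" for g
  proof -
    obtain L a where La: "set L \<subseteq> S" "a \<in> S" "prodL L a = g" using pos_conj_simple g by blast
    have LR: "set L \<subseteq> R" using La S_subR by auto
    have uW: "prodL L \<in> W" using weyl_eq LR by auto
    have "inner l (coroot g) = inner l (prodL L (coroot a))" using W_coroot[OF uW] La by simp
    also have "\<dots> = inner (inv (prodL L) l) (coroot a)" using W_adj2[OF uW] by simp
    also have "inv (prodL L) = prodL (rev L)" by (rule prodL_inv[OF zero_notin_L[OF LR]])
    finally show ?thesis using stab[of "rev L" l] La lP' by (auto simp: P'_def)
  qed
  have "inner l (coroot g) \<in> \<int>" if g: "g \<in> R" for g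
  proof (cases "g \<in> Rp")
    case True then show ?thesis using pos by simp
  next
    case False
    then have "- g \<in> Rp" using root_cases g by blast
    then have "inner l (coroot (- g)) \<in> \<int>" using pos by blast
    from Ints_minus[OF this] show ?thesis by (simp add: coroot_neg)
  qed
  then show ?thesis by (simp add: P_iff)
qed

lemma fw_P: "a \<in> S \<Longrightarrow> fund_weight R h a \<in> P"
  by (rule P_simple) (simp add: fw_prop)

definition T :: "('a \<Rightarrow> 'a) \<Rightarrow> 'a set" where
  "T v = {a\<in>S. inv v a \<in> uminus ` Rp}"

lemma st_P: "steinberg R h v \<in> P"
  unfolding steinberg_def by (rule P_sum) (auto intro: fw_P)

lemma st_coroot: "b \<in> S \<Longrightarrow> inner (steinberg R h v) (coroot b) = (if b \<in> T v then 1 else 0)"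
proof -
  assume b: "b \<in> S"
  have fin: "finite (T v)" using finS by (simp add: T_def)
  have "inner (steinberg R h v) (coroot b) = (\<Sum>a\<in>T v. inner (fund_weight R h a) (coroot b))"
    unfolding steinberg_def T_def by (simp add: inner_sum_left)
  also have "\<dots> = (\<Sum>a\<in>T v. if b = a then 1 else 0)"
    by (rule sum.cong) (auto simp: fw_prop b T_def)
  also have "\<dots> = (if b \<in> T v then 1 else 0)" using fin by simp
  finally show ?thesis .
qed

definition eps :: real where
  "eps = 1 / (1 + (\<Sum>b\<in>R. \<bar>inner (coroot b) h\<bar>))"

lemma eps_pos: "eps > 0"
proof -
  have "(\<Sum>b\<in>R. \<bar>inner (coroot b) h\<bar>) \<ge> 0" by (rule sum_nonneg) auto
  then have "1 + (\<Sum>b\<in>R. \<bar>inner (coroot b) h\<bar>) > 0" by linarith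
  then show ?thesis unfolding eps_def by simp
qed

lemma eps_small: "g \<in> R \<Longrightarrow> eps * \<bar>inner h (coroot g)\<bar> < 1"
proof -
  assume g: "g \<in> R"
  define E where "E = (\<Sum>b\<in>R. \<bar>inner (coroot b) h\<bar>)"
  have E0: "E \<ge> 0" unfolding E_def by (rule sum_nonneg) auto
  have "\<bar>inner (coroot g) h\<bar> \<le> E" unfolding E_def using g finR
    by (intro member_le_sum) auto
  then have "\<bar>inner h (coroot g)\<bar> < 1 + E" by (simp add: inner_commute)
  then show ?thesis using E0 by (simp add: eps_def E_def[symmetric] field_simps)
qed

lemma coroot_sign:
  assumes "g \<in> R"
  shows "inner y (coroot g) = (2 / inner g g) * inner y g" and "2 / inner g g > 0"
  using assms root_nz by (auto simp: coroot_def)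

lemma int_pos_ge1: "(k::real) \<in> \<int> \<Longrightarrow> k > 0 \<Longrightarrow> k \<ge> 1"
  by (metis Ints_cases of_int_0_less_iff of_int_1_le_iff zero_less_imp_eq_int int_one_le_iff_zero_less)

lemma int_neg_le: "(k::real) \<in> \<int> \<Longrightarrow> k < 0 \<Longrightarrow> k \<le> -1"
  using int_pos_ge1[of "-k"] Ints_minus[of k] by simp

lemma x_pos:
  assumes mu: "mu \<in> P" and g: "g \<in> R" and pos: "inner g mu > 0"
  shows "inner g (mu + eps *\<^sub>R h) > 0"
proof -
  have c: "inner y (coroot g) = (2 / inner g g) * inner y g" for y
    using coroot_sign[OF g] by auto
  have c2: "2 / inner g g > 0" using coroot_sign[OF g] by auto
  have k: "inner mu (coroot g) \<in> \<int>" using mu g by (simp add: P_iff)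
  have "inner mu (coroot g) > 0" using c[of mu] c2 pos by (simp add: inner_commute)
  then have k1: "inner mu (coroot g) \<ge> 1" using int_pos_ge1 k by blast
  have "eps * \<bar>inner h (coroot g)\<bar> < 1" using eps_small g by blast
  then have "eps * inner h (coroot g) > -1" using eps_pos
    by (metis abs_mult abs_of_pos abs_less_iff minus_less_iff)
  then have "inner (mu + eps *\<^sub>R h) (coroot g) > 0" using k1 by (simp add: inner_add_left)
  then have "0 < (2 / inner g g) * inner (mu + eps *\<^sub>R h) g" using c[of "mu + eps *\<^sub>R h"] by metis
  then have "0 < inner (mu + eps *\<^sub>R h) g" using zero_less_mult_pos c2 by blast
  then show ?thesis by (simp add: inner_commute)
qed

lemma x_neg:
  assumes mu: "mu \<in> P" and g: "g \<in> R" and neg: "inner g mu < 0"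
  shows "inner g (mu + eps *\<^sub>R h) < 0"
proof -
  have c: "inner y (coroot g) = (2 / inner g g) * inner y g" for y
    using coroot_sign[OF g] by auto
  have c2: "2 / inner g g > 0" using coroot_sign[OF g] by auto
  have k: "inner mu (coroot g) \<in> \<int>" using mu g by (simp add: P_iff)
  have "(2 / inner g g) * inner mu g < 0" using mult_pos_neg[OF c2, of "inner mu g"] neg by (simp add: inner_commute)
  then have "inner mu (coroot g) < 0" using c[of mu] by metis
  then have k1: "inner mu (coroot g) \<le> -1" using int_neg_le k by blast
  have "eps * \<bar>inner h (coroot g)\<bar> < 1" using eps_small g by blast
  then have "eps * inner h (coroot g) < 1" using eps_pos
    by (metis abs_mult abs_of_pos abs_less_iff)
  then have "inner (mu + eps *\<^sub>R h) (coroot g) < 0" using k1 by (simp add: inner_add_left)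
  then have lt: "(2 / inner g g) * inner (mu + eps *\<^sub>R h) g < 0" using c[of "mu + eps *\<^sub>R h"] by metis
  have "inner (mu + eps *\<^sub>R h) g < 0"
  proof (rule ccontr)
    assume "\<not> inner (mu + eps *\<^sub>R h) g < 0"
    then have "0 \<le> (2 / inner g g) * inner (mu + eps *\<^sub>R h) g"
      using c2 by (intro mult_nonneg_nonneg) auto
    then show False using lt by linarith
  qed
  then show ?thesis by (simp add: inner_commute)
qed

lemma x_zero: "inner g mu = 0 \<Longrightarrow> inner g (mu + eps *\<^sub>R h) = eps * inner g h"
  by (simp add: inner_add_right)

lemma x_reg:
  assumes mu: "mu \<in> P"
  shows "\<forall>b\<in>R. inner (mu + eps *\<^sub>R h) b \<noteq> 0"
proof
  fix b assume b: "b \<in> R"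
  consider "inner b mu > 0" | "inner b mu < 0" | "inner b mu = 0" by linarith
  then show "inner (mu + eps *\<^sub>R h) b \<noteq> 0"
  proof cases
    case 1 then show ?thesis using x_pos[OF mu b] by (simp add: inner_commute)
  next
    case 2 then show ?thesis using x_neg[OF mu b] by (simp add: inner_commute)
  next
    case 3 then show ?thesis using x_zero[of b mu] eps_pos reg b by (simp add: inner_commute)
  qed
qed

end

context rsys begin

lemma lam_props:
  assumes v: "v \<in> W" and s: "\<sigma> \<in> dominant_weights R h"
  shows "steinberg R h v + \<sigma> \<in> P"
    and "\<forall>a\<in>S. inner (steinberg R h v + \<sigma>) (coroot a) \<ge> 0"
    and "\<And>a. a \<in> S \<Longrightarrow> a \<in> T v \<Longrightarrow> inner (steinberg R h v + \<sigma>) (coroot a) \<ge> 1"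
proof -
  have sP: "\<sigma> \<in> P" and sd: "\<forall>a\<in>S. inner \<sigma> (coroot a) \<ge> 0"
    using s by (auto simp: dominant_weights_def)
  show "steinberg R h v + \<sigma> \<in> P" using P_add[OF st_P sP] .
  show "\<forall>a\<in>S. inner (steinberg R h v + \<sigma>) (coroot a) \<ge> 0"
    using sd by (auto simp: inner_add_left st_coroot)
  show "\<And>a. a \<in> S \<Longrightarrow> a \<in> T v \<Longrightarrow> inner (steinberg R h v + \<sigma>) (coroot a) \<ge> 1"
    using sd by (auto simp: inner_add_left st_coroot)
qed

lemma well_def:
  assumes v: "v \<in> min_reps R h I" and s: "\<sigma> \<in> dominant_weights R h"
  shows "inv v (steinberg R h v + \<sigma>) \<in> par_dominant R h I"
proof -
  have vW: "v \<in> W" and vI: "v ` (parabolic_roots R h I \<inter> Rp) \<subseteq> Rp"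
    using v by (auto simp: min_reps_def)
  note lp = lam_props[OF vW s]
  have "inv v (steinberg R h v + \<sigma>) \<in> P" using P_W[OF lp(1) W_inv[OF vW]] .
  moreover have "inner (inv v (steinberg R h v + \<sigma>)) a \<ge> 0" if a: "a \<in> parabolic_roots R h I \<inter> Rp" for a
  proof -
    have "v a \<in> Rp" using vI a by auto
    then have "inner (steinberg R h v + \<sigma>) (v a) \<ge> 0" using dom_pos lp(2) by blast
    then show ?thesis using W_adj2[OF vW] by simp
  qed
  ultimately show ?thesis by (auto simp: par_dominant_def)
qed

lemma claimA:
  assumes vW: "v \<in> W" and s: "\<sigma> \<in> dominant_weights R h"
    and mu: "mu = inv v (steinberg R h v + \<sigma>)"
  shows "\<forall>\<beta>\<in>Rp. inner (v (mu + eps *\<^sub>R h)) \<beta> > 0"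
proof
  define lam where "lam = steinberg R h v + \<sigma>"
  note lp = lam_props[OF vW s, folded lam_def]
  have muP: "mu \<in> P" using P_W[OF lp(1) W_inv[OF vW]] mu lam_def by simp
  have ivW: "inv v \<in> W" using W_inv[OF vW] .
  fix b assume b: "b \<in> Rp"
  define g where "g = inv v b"
  have gR: "g \<in> R" using W_root[OF ivW] b Rp_sub g_def by auto
  have eq: "inner (v (mu + eps *\<^sub>R h)) b = inner g (mu + eps *\<^sub>R h)"
    using W_adj[OF vW] by (simp add: g_def inner_commute)
  have gmu: "inner g mu = inner b lam" using W_inner[OF ivW] by (simp add: g_def mu lam_def)
  have "inner b lam \<ge> 0" using dom_pos[OF lp(2) b] by (simp add: inner_commute)
  then consider "inner g mu > 0" | "inner g mu = 0" using gmu by linarith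
  then show "inner (v (mu + eps *\<^sub>R h)) b > 0"
  proof cases
    case 1 then show ?thesis using eq x_pos[OF muP gR] by simp
  next
    case 2
    obtain c where c: "\<forall>d\<in>S. c d \<ge> 0" "b = (\<Sum>d\<in>S. c d *\<^sub>R d)" using cone b by blast
    have dl: "inner d lam \<ge> 0" if "d \<in> S" for d
      using dom_pos[OF lp(2)] that S_sub by (auto simp: inner_commute)
    have "inner b lam = (\<Sum>d\<in>S. c d * inner d lam)"
      using c(2) by (simp add: inner_sum_left)
    then have "(\<Sum>d\<in>S. c d * inner d lam) = inner b lam" by simp
    also have "\<dots> = 0" using 2 gmu by simp
    finally have "\<forall>d\<in>S. c d * inner d lam = 0"
      using finS c(1) dl by (subst (asm) sum_nonneg_eq_0_iff) auto
    then have cd: "c d = 0 \<or> inner (inv v d) h > 0" if d: "d \<in> S" for d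
    proof -
      assume "\<forall>d\<in>S. c d * inner d lam = 0"
      show ?thesis
      proof (cases "c d = 0")
        case False
        then have "inner d lam = 0" using \<open>\<forall>d\<in>S. c d * inner d lam = 0\<close> d by auto
        then have "inner lam (coroot d) = 0" by (simp add: coroot_def inner_commute)
        then have "d \<notin> T v" using lp(3)[OF d] by fastforce
        then have "inv v d \<notin> uminus ` Rp" using d by (simp add: T_def)
        moreover have "inv v d \<in> R" using W_root[OF ivW] d S_subR by auto
        ultimately have "inner (inv v d) h > 0" using reg negRp_iff by force
        then show ?thesis by simp
      qed simp
    qed
    have "inner g h = inner b (v h)" using W_adj2[OF vW] by (simp add: g_def)
    also have "\<dots> = (\<Sum>d\<in>S. c d * inner d (v h))"
      by (subst c(2)) (simp add: inner_sum_left)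
    also have "\<dots> = (\<Sum>d\<in>S. c d * inner (inv v d) h)"
      using W_adj2[OF vW] by simp
    finally have gh: "inner g h = (\<Sum>d\<in>S. c d * inner (inv v d) h)" .
    have "(\<Sum>d\<in>S. c d * inner (inv v d) h) \<ge> 0"
    proof (rule sum_nonneg)
      fix d assume d: "d \<in> S"
      show "c d * inner (inv v d) h \<ge> 0" using cd[OF d] c(1) d by auto
    qed
    moreover have "inner g h \<noteq> 0" using reg gR by auto
    ultimately have "inner g h > 0" using gh by linarith
    then show ?thesis using eq x_zero[OF 2] eps_pos by simp
  qed
qed

lemma claimB:
  assumes mu: "mu \<in> par_dominant R h I"
  shows "\<exists>v \<sigma>. v \<in> min_reps R h I \<and> \<sigma> \<in> dominant_weights R h \<and> inv v (steinberg R h v + \<sigma>) = mu"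
proof -
  have muP: "mu \<in> P" and mud: "\<forall>a\<in>parabolic_roots R h I \<inter> Rp. inner mu a \<ge> 0"
    using mu by (auto simp: par_dominant_def)
  define x where "x = mu + eps *\<^sub>R h"
  obtain v where vW: "v \<in> W" and vC: "\<forall>\<beta>\<in>Rp. inner (v x) \<beta> > 0"
    using chamber_exists[OF x_reg[OF muP]] x_def by blast
  have ivW: "inv v \<in> W" using W_inv[OF vW] .
  have key: "inner (inv v b) x > 0" if b: "b \<in> Rp" for b
    using vC b W_adj[OF vW] by (metis inner_commute)
  define lam where "lam = v mu"
  have lamP: "lam \<in> P" using P_W[OF muP vW] lam_def by simp
  have ivR: "inv v a \<in> R" if "a \<in> R" for a using W_root[OF ivW] that by auto
  have lam_a: "inner lam a = inner (inv v a) mu" for a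
    using W_adj[OF vW] by (simp add: lam_def inner_commute)
  have ge0: "inner (inv v a) mu \<ge> 0" if a: "a \<in> S" for a
  proof (rule ccontr)
    assume "\<not> inner (inv v a) mu \<ge> 0"
    then have "inner (inv v a) x < 0" using x_neg[OF muP ivR] a S_subR x_def by auto
    then show False using key a S_sub by force
  qed
  have gt0: "inner (inv v a) mu > 0" if a: "a \<in> S" and aT: "a \<in> T v" for a
  proof (rule ccontr)
    assume "\<not> inner (inv v a) mu > 0"
    then have z: "inner (inv v a) mu = 0" using ge0[OF a] by simp
    have "inner (inv v a) h < 0" using aT negRp_iff by (auto simp: T_def)
    then have "inner (inv v a) x < 0" using x_zero[OF z] eps_pos x_def by (simp add: mult_pos_neg)
    then show False using key a S_sub by force
  qed
  have lc: "inner lam (coroot a) = (2 / inner a a) * inner lam a" for a by (simp add: coroot_def)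
  have aa: "inner a a > 0" if "a \<in> S" for a using S_nz that by simp
  have lam_dom: "inner lam (coroot a) \<ge> 0" if a: "a \<in> S" for a
    using ge0[OF a] lam_a lc aa[OF a] by simp
  have lam_T: "inner lam (coroot a) \<ge> 1" if a: "a \<in> S" and aT: "a \<in> T v" for a
  proof -
    have "inner lam (coroot a) > 0" using gt0[OF a aT] lam_a lc aa[OF a] by simp
    moreover have "inner lam (coroot a) \<in> \<int>" using lamP a S_subR by (auto simp: P_iff)
    ultimately show ?thesis using int_pos_ge1 by blast
  qed
  define \<sigma> where "\<sigma> = lam - steinberg R h v"
  have sP: "\<sigma> \<in> P" using P_diff[OF lamP st_P] \<sigma>_def by simp
  have "inner \<sigma> (coroot a) \<ge> 0" if a: "a \<in> S" for a
    using lam_dom[OF a] lam_T[OF a] by (simp add: \<sigma>_def inner_diff_left st_coroot[OF a])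
  then have sD: "\<sigma> \<in> dominant_weights R h" using sP by (simp add: dominant_weights_def)
  have "v g \<in> Rp" if g: "g \<in> parabolic_roots R h I \<inter> Rp" for g
  proof -
    have gR: "g \<in> R" using g Rp_sub by auto
    have "inner g mu \<ge> 0" using mud g by (simp add: inner_commute)
    moreover have "inner g h > 0" using g by (simp add: Rp_iff)
    ultimately have "inner g mu + eps * inner g h > 0" using eps_pos mult_pos_pos[of eps "inner g h"] by linarith
    then have gx: "inner g x > 0" by (simp add: x_def inner_add_right)
    have "inner (v x) (v g) = inner x g" using W_inner[OF vW] .
    then have pos: "inner (v x) (v g) > 0" using gx by (simp add: inner_commute)
    have vgR: "v g \<in> R" using W_root[OF vW gR] .
    show ?thesis
    proof (rule ccontr)
      assume "v g \<notin> Rp"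
      then have "- v g \<in> Rp" using root_cases vgR by blast
      then show False using vC pos by force
    qed
  qed
  then have vM: "v \<in> min_reps R h I" using vW by (auto simp: min_reps_def)
  have "inv v (steinberg R h v + \<sigma>) = mu" using vW by (simp add: \<sigma>_def lam_def)
  then show ?thesis using vM sD by blast
qed

theorem main:
  "(\<forall>v\<in>min_reps R h I. \<forall>\<sigma>\<in>dominant_weights R h.
            inv v (steinberg R h v + \<sigma>) \<in> par_dominant R h I)
    \<and> bij_betw (\<lambda>(v, \<sigma>). inv v (steinberg R h v + \<sigma>))
        (min_reps R h I \<times> dominant_weights R h) (par_dominant R h I)"
proof (intro conjI ballI)
  show "inv v (steinberg R h v + \<sigma>) \<in> par_dominant R h I"
    if "v \<in> min_reps R h I" "\<sigma> \<in> dominant_weights R h" for v \<sigma>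
    using well_def that by blast
  let ?f = "\<lambda>(v, \<sigma>). inv v (steinberg R h v + \<sigma>)"
  have inj: "inj_on ?f (min_reps R h I \<times> dominant_weights R h)"
  proof (rule inj_onI, clarify)
    fix v \<sigma> v' \<sigma>'
    assume v: "v \<in> min_reps R h I" and s: "\<sigma> \<in> dominant_weights R h"
      and v': "v' \<in> min_reps R h I" and s': "\<sigma>' \<in> dominant_weights R h"
      and eq: "inv v (steinberg R h v + \<sigma>) = inv v' (steinberg R h v' + \<sigma>')"
    have vW: "v \<in> W" and v'W: "v' \<in> W" using v v' by (auto simp: min_reps_def)
    define mu where "mu = inv v (steinberg R h v + \<sigma>)"
    have A1: "\<forall>\<beta>\<in>Rp. inner (v (mu + eps *\<^sub>R h)) \<beta> > 0" using claimA[OF vW s mu_def] .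
    have A2: "\<forall>\<beta>\<in>Rp. inner (v' (mu + eps *\<^sub>R h)) \<beta> > 0" using claimA[OF v'W s'] eq mu_def by simp
    have vv: "v = v'" using chamber_unique[OF vW v'W A1 A2] .
    have "v (inv v (steinberg R h v + \<sigma>)) = v (inv v (steinberg R h v + \<sigma>'))" using eq vv by simp
    then have "\<sigma> = \<sigma>'" using vW by simp
    then show "v = v' \<and> \<sigma> = \<sigma>'" using vv by simp
  qed
  have "?f ` (min_reps R h I \<times> dominant_weights R h) = par_dominant R h I"
  proof
    show "?f ` (min_reps R h I \<times> dominant_weights R h) \<subseteq> par_dominant R h I"
      using well_def by auto
    show "par_dominant R h I \<subseteq> ?f ` (min_reps R h I \<times> dominant_weights R h)"
    proof
      fix mu assume "mu \<in> par_dominant R h I"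
      then obtain v \<sigma> where "v \<in> min_reps R h I" "\<sigma> \<in> dominant_weights R h"
        "inv v (steinberg R h v + \<sigma>) = mu" using claimB by blast
      then show "mu \<in> ?f ` (min_reps R h I \<times> dominant_weights R h)"
        by (auto intro!: image_eqI[of _ _ "(v, \<sigma>)"])
    qed
  qed
  then show "bij_betw ?f (min_reps R h I \<times> dominant_weights R h) (par_dominant R h I)"
    using inj by (simp add: bij_betw_def)
qed

end


theorem mainTheorem1:
  fixes R :: "'a::euclidean_space set" and h :: 'a and I :: "('a \<Rightarrow> 'a) set"
  assumes "root_system R"
    and "\<forall>\<alpha>\<in>R. inner \<alpha> h \<noteq> 0"
    and "I \<subseteq> simple_refls R h"
  shows "(\<forall>v\<in>min_reps R h I. \<forall>\<sigma>\<in>dominant_weights R h.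
            inv v (steinberg R h v + \<sigma>) \<in> par_dominant R h I)
    \<and> bij_betw (\<lambda>(v, \<sigma>). inv v (steinberg R h v + \<sigma>))
        (min_reps R h I \<times> dominant_weights R h) (par_dominant R h I)"
proof -
  interpret rsys R h using assms(1,2) by unfold_locales
  show ?thesis by (rule main)
qed

end
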